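(* There is an absolute constant $c>0$ such that the following holds. Let $(X,d)$ be a finite metric space with terminals $t_1,\dots,t_k$, $k\ge2$, let $\Delta>0$, and let $\Pi$ be the random partial partition produced by the truncated-exponential ball-carving procedure with parameters $\lambda=\Delta/\ln k$ and $\Delta$. If $P$ is a shortest path in $X$ with $d(P)<\lambda$, then for every $t\ge1$, $\Pr[Z_P>t]\le 2e^{-ct}$.
   Context: Truncated exponential $\mathrm{Texp}(\lambda,\Delta)$: the distribution on $[0,\Delta)$ with density $g(x)=\frac{1}{\lambda(1-e^{-\Delta/\lambda})}e^{-x/\lambda}$. $B(x,r)=\{y\in X:d(x,y)\le r\}$. Ball-carving procedure: for $j=1,\dots,k$ choose independently $R_j\sim\mathrm{Texp}(\lambda,\Delta)$, let $B_j=B(t_j,R_j)$ and $S_j=B_j\setminus\bigcup_{m<j}B_m$; output $\Pi=\{S_1,\dots,S_k\}\setminus\{\emptyset\}$. A shortest path is a sequence $P=(x_0,\dots,x_\ell)$ of points with $\sum_i d(x_{i-1},x_i)=d(x_0,x_\ell)$, of length $d(P)=d(x_0,x_\ell)$. $Z_P$ is the number of clusters $S\in\Pi$ with $S\cap P\neq\emptyset$. *)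

theory Defs
  imports "HOL-Probability.Probability"
begin

definition finite_metric_space :: "'a set \<Rightarrow> ('a \<Rightarrow> 'a \<Rightarrow> real) \<Rightarrow> bool" where
  "finite_metric_space X d \<longleftrightarrow> finite X \<and>
     (\<forall>x\<in>X. \<forall>y\<in>X. d x y \<ge> 0 \<and> (d x y = 0 \<longleftrightarrow> x = y) \<and> d x y = d y x) \<and>
     (\<forall>x\<in>X. \<forall>y\<in>X. \<forall>z\<in>X. d x z \<le> d x y + d y z)"

definition texp_density :: "real \<Rightarrow> real \<Rightarrow> real \<Rightarrow> real" where
  "texp_density lam Del x =
     indicator {0..<Del} x * exp (- x / lam) / (lam * (1 - exp (- Del / lam)))"

definition texp :: "real \<Rightarrow> real \<Rightarrow> real measure" where
  "texp lam Del = density lborel (\<lambda>x. ennreal (texp_density lam Del x))"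

definition radii_measure :: "nat \<Rightarrow> real \<Rightarrow> real \<Rightarrow> (nat \<Rightarrow> real) measure" where
  "radii_measure k lam Del = PiM {..<k} (\<lambda>_. texp lam Del)"

definition cball_in :: "'a set \<Rightarrow> ('a \<Rightarrow> 'a \<Rightarrow> real) \<Rightarrow> 'a \<Rightarrow> real \<Rightarrow> 'a set" where
  "cball_in X d x r = {y \<in> X. d x y \<le> r}"

text \<open>Cluster S_j = B_j minus the union of B_m for m < j (indices 0-based).\<close>
definition cluster :: "'a set \<Rightarrow> ('a \<Rightarrow> 'a \<Rightarrow> real) \<Rightarrow> (nat \<Rightarrow> 'a) \<Rightarrow> (nat \<Rightarrow> real) \<Rightarrow> nat \<Rightarrow> 'a set" where
  "cluster X d t R j = cball_in X d (t j) (R j) - (\<Union>m<j. cball_in X d (t m) (R m))"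

definition partial_partition :: "'a set \<Rightarrow> ('a \<Rightarrow> 'a \<Rightarrow> real) \<Rightarrow> nat \<Rightarrow> (nat \<Rightarrow> 'a) \<Rightarrow> (nat \<Rightarrow> real) \<Rightarrow> 'a set set" where
  "partial_partition X d k t R = (cluster X d t R ` {..<k}) - {{}}"

definition Z_count :: "'a set \<Rightarrow> ('a \<Rightarrow> 'a \<Rightarrow> real) \<Rightarrow> nat \<Rightarrow> (nat \<Rightarrow> 'a) \<Rightarrow> 'a list \<Rightarrow> (nat \<Rightarrow> real) \<Rightarrow> nat" where
  "Z_count X d k t P R = card {S \<in> partial_partition X d k t R. S \<inter> set P \<noteq> {}}"

definition shortest_path :: "'a set \<Rightarrow> ('a \<Rightarrow> 'a \<Rightarrow> real) \<Rightarrow> 'a list \<Rightarrow> bool" where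
  "shortest_path X d P \<longleftrightarrow> P \<noteq> [] \<and> set P \<subseteq> X \<and>
     (\<Sum>i<length P - 1. d (P ! i) (P ! Suc i)) = d (hd P) (last P)"

definition path_length :: "('a \<Rightarrow> 'a \<Rightarrow> real) \<Rightarrow> 'a list \<Rightarrow> real" where
  "path_length d P = d (hd P) (last P)"

end

theory Submission
  imports Defs
begin


lemma texp_Icc_integral:
  assumes lam: "lam > 0" and "0 \<le> m" and Z: "Z > 0"
  shows "(\<integral>\<^sup>+y. ennreal (exp (- y / lam) / (lam * Z)) * indicator {0..m} y \<partial>lborel)
     = ennreal ((1 - exp (- m / lam)) / Z)"
proof -
  have "(\<integral>\<^sup>+y. ennreal (exp (- y / lam) / (lam * Z)) * indicator {0..m} y \<partial>lborel)
     = ennreal ((\<lambda>y. - exp (- y / lam) / Z) m - (\<lambda>y. - exp (- y / lam) / Z) 0)"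
  proof (rule nn_integral_FTC_Icc)
    fix x :: real
    show "((\<lambda>y. - exp (- y / lam) / Z) has_real_derivative exp (- x / lam) / (lam * Z)) (at x)"
      using lam Z by (auto intro!: derivative_eq_intros simp: field_simps)
  next
    fix x :: real assume "x \<in> {0..m}"
    show "0 \<le> exp (- x / lam) / (lam * Z)" using lam Z by simp
  qed (use assms in auto)
  then show ?thesis by (simp add: diff_divide_distrib)
qed

lemma texp_dens_meas[measurable]: "(\<lambda>x. ennreal (texp_density lam Del x)) \<in> borel_measurable borel"
  unfolding texp_density_def by measurable

lemma space_texp[simp]: "space (texp lam Del) = UNIV"
  unfolding texp_def by simp

lemma sets_texp[simp]: "sets (texp lam Del) = sets borel"
  unfolding texp_def by simp

lemma texp_lessThan:
  assumes lam: "lam > 0" and Del: "Del > 0"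
  shows "emeasure (texp lam Del) {..<x} =
    ennreal ((1 - exp (- max 0 (min x Del) / lam)) / (1 - exp (- Del / lam)))"
proof -
  define Z where "Z = 1 - exp (- Del / lam)"
  have Z: "Z > 0" unfolding Z_def using lam Del by simp
  define m where "m = max 0 (min x Del)"
  have "emeasure (texp lam Del) {..<x} = (\<integral>\<^sup>+y. ennreal (texp_density lam Del y) * indicator {..<x} y \<partial>lborel)"
    unfolding texp_def by (subst emeasure_density) auto
  also have "\<dots> = (\<integral>\<^sup>+y. ennreal (exp (- y / lam) / (lam * Z)) * indicator {0..m} y \<partial>lborel)"
  proof (rule nn_integral_cong_AE)
    show "AE y in lborel. ennreal (texp_density lam Del y) * indicator {..<x} y =
        ennreal (exp (- y / lam) / (lam * Z)) * indicator {0..m} y"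
      using AE_lborel_singleton[of m]
      by eventually_elim (auto simp: texp_density_def indicator_def m_def Z_def)
  qed
  also have "\<dots> = ennreal ((1 - exp (- m / lam)) / Z)"
    by (rule texp_Icc_integral) (use lam Z in \<open>auto simp: m_def\<close>)
  finally show ?thesis unfolding m_def Z_def .
qed

lemma texp_UNIV:
  assumes lam: "lam > 0" and Del: "Del > 0"
  shows "emeasure (texp lam Del) UNIV = 1"
proof -
  define Z where "Z = 1 - exp (- Del / lam)"
  have Z: "Z > 0" unfolding Z_def using lam Del by simp
  have "emeasure (texp lam Del) UNIV = (\<integral>\<^sup>+y. ennreal (texp_density lam Del y) * indicator UNIV y \<partial>lborel)"
    unfolding texp_def by (subst emeasure_density) auto
  also have "\<dots> = (\<integral>\<^sup>+y. ennreal (exp (- y / lam) / (lam * Z)) * indicator {0..Del} y \<partial>lborel)"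
  proof (rule nn_integral_cong_AE)
    show "AE y in lborel. ennreal (texp_density lam Del y) * indicator UNIV y =
        ennreal (exp (- y / lam) / (lam * Z)) * indicator {0..Del} y"
      using AE_lborel_singleton[of Del]
      by eventually_elim (auto simp: texp_density_def indicator_def Z_def)
  qed
  also have "\<dots> = ennreal ((1 - exp (- Del / lam)) / Z)"
    by (rule texp_Icc_integral) (use lam Z Del in \<open>auto\<close>)
  finally show ?thesis using Z lam Del unfolding Z_def by simp
qed

lemma prob_space_texp:
  assumes lam: "lam > 0" and Del: "Del > 0"
  shows "prob_space (texp lam Del)"
  by (rule prob_spaceI) (use texp_UNIV[OF assms] in simp)



lemma comb_bound:
  fixes p q :: "nat \<Rightarrow> real"
  assumes p: "\<And>i. i < k \<Longrightarrow> 0 \<le> p i" and q: "\<And>i. i < k \<Longrightarrow> 0 \<le> q i"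
    and key: "\<And>i. i < k \<Longrightarrow> 25 * p i + 16 * q i \<le> 16 + 16 * \<epsilon>" and e: "0 \<le> \<epsilon>"
  shows "(\<Sum>n<k. (5/4) * p n * (\<Prod>i<n. (5/4) * p i + q i))
        + 4 * (\<Prod>i<k. (5/4) * p i + q i) \<le> 4 * (1 + \<epsilon>) ^ k"
  using assms
proof (induction k)
  case 0
  then show ?case by simp
next
  case (Suc k)
  define T where "T = (\<Sum>n<k. (5/4) * p n * (\<Prod>i<n. (5/4) * p i + q i))"
  define P where "P = (\<Prod>i<k. (5/4) * p i + q i)"
  have IH: "T + 4 * P \<le> 4 * (1 + \<epsilon>) ^ k"
    unfolding T_def P_def using Suc.prems by (intro Suc.IH) auto
  have P0: "0 \<le> P" unfolding P_def using Suc.prems by (intro prod_nonneg) auto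
  have T0: "0 \<le> T" unfolding T_def using Suc.prems
    by (intro sum_nonneg mult_nonneg_nonneg prod_nonneg) auto
  have k: "25 * p k + 16 * q k \<le> 16 + 16 * \<epsilon>" using Suc.prems by auto
  have "(\<Sum>n<Suc k. (5/4) * p n * (\<Prod>i<n. (5/4) * p i + q i))
        + 4 * (\<Prod>i<Suc k. (5/4) * p i + q i) = T + P * ((25/4) * p k + 4 * q k)"
    unfolding T_def P_def by (simp add: algebra_simps)
  also have "\<dots> \<le> T + P * (4 * (1 + \<epsilon>))"
    using k P0 by (intro add_left_mono mult_left_mono) auto
  also have "\<dots> \<le> (1 + \<epsilon>) * (T + 4 * P)" using T0 e by (simp add: algebra_simps)
  also have "\<dots> \<le> (1 + \<epsilon>) * (4 * (1 + \<epsilon>) ^ k)" using IH e by (intro mult_left_mono) auto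
  finally show ?case by simp
qed

lemma tail_bound:
  fixes \<mu> w :: real
  assumes "\<mu> \<le> 1" "\<mu> \<le> 37 * exp (- (7 * w))"
  shows "\<mu> \<le> 2 * exp (- w)"
proof -
  define y where "y = exp w"
  have y0: "y > 0" unfolding y_def by simp
  have e: "exp (- w) = 1 / y" unfolding y_def by (simp add: exp_minus inverse_eq_divide)
  have y7: "exp (- (7 * w)) = 1 / y ^ 7"
    unfolding y_def using exp_of_nat_mult[of 7 w] by (simp add: exp_minus inverse_eq_divide)
  show ?thesis
  proof (cases "y \<le> 2")
    case True
    then have "1 \<le> 2 * (1 / y)" using y0 by (simp add: field_simps)
    then show ?thesis using assms(1) e by simp
  next
    case False
    then have "(2::real) ^ 6 \<le> y ^ 6" by (intro power_mono) auto
    then have h: "37 \<le> 2 * y ^ 6" by simp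
    have y7e: "y ^ 7 = y * y ^ 6" by (simp add: power_Suc[symmetric] del: power_Suc)
    have "37 / y ^ 7 \<le> (2 * y ^ 6) / y ^ 7" using h y0 by (intro divide_right_mono) auto
    also have "(2 * y ^ 6) / y ^ 7 = 2 / y" using y0 unfolding y7e by simp
    finally have "37 * (1 / y ^ 7) \<le> 2 * (1 / y)" by simp
    then show ?thesis using assms(2) e y7 by simp
  qed
qed

lemma key_ineq:
  fixes lam Del a b L :: real and k :: nat
  assumes lam: "lam > 0" and Del: "Del > 0" and a: "0 \<le> a" "a \<le> b" "b \<le> a + L"
    and L: "0 \<le> L" "L < lam" and Ez: "exp (- Del / lam) = 1 / real k" and k: "k \<ge> 2"
  defines "Ea \<equiv> exp (- max 0 (min a Del) / lam)" and "Eb \<equiv> exp (- max 0 (min b Del) / lam)"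
    and "Z0 \<equiv> 1 - exp (- Del / lam)"
  shows "25 * ((Ea - Eb) / Z0) + 16 * ((1 - Ea) / Z0) \<le> 16 + 16 * (2 / real k)"
proof -
  define u where "u = 1 / real k"
  have kr: "real k \<ge> 2" using k by simp
  have u: "0 < u" "u \<le> 1/2" unfolding u_def using kr by (auto simp: field_simps)
  have Z0: "Z0 = 1 - u" unfolding Z0_def Ez u_def ..
  have Z0pos: "Z0 > 0" using u unfolding Z0 by simp
  define A where "A = max 0 (min a Del)"
  have m: "max 0 (min b Del) \<le> A + L" using a L by (auto simp: min_def max_def A_def)
  have "max 0 (min b Del) / lam \<le> (A + L) / lam"
    using m lam by (intro divide_right_mono) auto
  then have "Eb \<ge> exp (- ((A + L) / lam))" unfolding Eb_def by simp
  also have "- ((A + L) / lam) = - A / lam + - L / lam" by (simp add: add_divide_distrib)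
  also have "exp (- A / lam + - L / lam) = Ea * exp (- L / lam)"
    unfolding Ea_def A_def by (rule exp_add)
  finally have Eb1: "Ea * exp (- L / lam) \<le> Eb" .
  have "L / lam \<le> 1" using L lam by simp
  then have "exp (-1) \<le> exp (- L / lam)" by simp
  then have "Ea * exp (-1) \<le> Ea * exp (- L / lam)" unfolding Ea_def by (intro mult_left_mono) auto
  with Eb1 have "Ea * exp (-1) \<le> Eb" by linarith
  then have "Ea * exp (-1) * exp 1 \<le> Eb * exp 1" by (intro mult_right_mono) auto
  moreover have "Ea * exp (-1) * exp 1 = Ea" by (simp add: exp_minus)
  ultimately have "Ea \<le> Eb * exp 1" by simp
  also have "Eb * exp 1 \<le> Eb * (25/9)"
    using e_less_272 unfolding Eb_def by (intro mult_left_mono) auto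
  finally have EaEb: "Ea \<le> (25/9) * Eb" by simp
  have "25 * (Ea - Eb) + 16 * (1 - Ea) \<le> 16" using EaEb by simp
  also have "16 \<le> (16 + 16 * (2 * u)) * (1 - u)"
  proof -
    have "0 \<le> 16 * u * (1 - 2 * u)" using u by (intro mult_nonneg_nonneg) auto
    moreover have "(16 + 16 * (2 * u)) * (1 - u) = 16 + 16 * u * (1 - 2 * u)" by (simp add: algebra_simps)
    ultimately show ?thesis by linarith
  qed
  finally have "25 * (Ea - Eb) + 16 * (1 - Ea) \<le> (16 + 16 * (2 / real k)) * Z0"
    unfolding Z0 u_def by simp
  then have "(25 * (Ea - Eb) + 16 * (1 - Ea)) / Z0 \<le> 16 + 16 * (2 / real k)"
    using Z0pos by (simp add: pos_divide_le_eq)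
  moreover have "25 * ((Ea - Eb) / Z0) + 16 * ((1 - Ea) / Z0) = (25 * (Ea - Eb) + 16 * (1 - Ea)) / Z0"
    by (simp only: add_divide_distrib times_divide_eq_right)
  ultimately show ?thesis by simp
qed



lemma path_dist:
  assumes fm: "finite_metric_space X d" and sp: "shortest_path X d P"
    and y: "y0 \<in> set P" "y1 \<in> set P"
  shows "d y0 y1 \<le> path_length d P"
proof -
  have ne: "P \<noteq> []" and PX: "set P \<subseteq> X"
    and sum: "(\<Sum>i<length P - 1. d (P ! i) (P ! Suc i)) = d (hd P) (last P)"
    using sp unfolding shortest_path_def by auto
  have inX: "\<And>i. i < length P \<Longrightarrow> P ! i \<in> X" using PX by auto
  have d0: "\<And>x y. x \<in> X \<Longrightarrow> y \<in> X \<Longrightarrow> 0 \<le> d x y"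
    and dxx: "\<And>x. x \<in> X \<Longrightarrow> d x x = 0"
    and dsym: "\<And>x y. x \<in> X \<Longrightarrow> y \<in> X \<Longrightarrow> d x y = d y x"
    and tri: "\<And>x y z. x \<in> X \<Longrightarrow> y \<in> X \<Longrightarrow> z \<in> X \<Longrightarrow> d x z \<le> d x y + d y z"
    using fm unfolding finite_metric_space_def by blast+
  have chain: "d (P ! i) (P ! j) \<le> (\<Sum>l\<in>{i..<j}. d (P ! l) (P ! Suc l))"
    if "i \<le> j" "j < length P" for i j
    using that
  proof (induction j)
    case 0
    then show ?case using dxx inX by simp
  next
    case (Suc j)
    show ?case
    proof (cases "i = Suc j")
      case True
      then show ?thesis using dxx inX Suc.prems by simp
    next
      case False
      then have ij: "i \<le> j" using Suc.prems by simp
      have "d (P ! i) (P ! Suc j) \<le> d (P ! i) (P ! j) + d (P ! j) (P ! Suc j)"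
        using Suc.prems ij by (intro tri inX) auto
      also have "\<dots> \<le> (\<Sum>l\<in>{i..<j}. d (P ! l) (P ! Suc l)) + d (P ! j) (P ! Suc j)"
        using Suc.IH[OF ij] Suc.prems by simp
      also have "\<dots> = (\<Sum>l\<in>{i..<Suc j}. d (P ! l) (P ! Suc l))"
        using ij by simp
      finally show ?thesis .
    qed
  qed
  have le: "d (P ! i) (P ! j) \<le> path_length d P" if "i \<le> j" "j < length P" for i j
  proof -
    have "d (P ! i) (P ! j) \<le> (\<Sum>l\<in>{i..<j}. d (P ! l) (P ! Suc l))" using chain that .
    also have "\<dots> \<le> (\<Sum>l<length P - 1. d (P ! l) (P ! Suc l))"
      using that by (intro sum_mono2) (auto intro!: d0 inX)
    finally show ?thesis using sum unfolding path_length_def by simp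
  qed
  obtain i where i: "i < length P" "y0 = P ! i" using y(1) by (auto simp: in_set_conv_nth)
  obtain j where j: "j < length P" "y1 = P ! j" using y(2) by (auto simp: in_set_conv_nth)
  show ?thesis
  proof (cases "i \<le> j")
    case True
    then show ?thesis using le i j by simp
  next
    case False
    then have "d (P ! j) (P ! i) \<le> path_length d P" using le i j by simp
    then show ?thesis using i j dsym inX by simp
  qed
qed

theorem mainTheorem4:
  shows "\<exists>c>0. \<forall>(X :: nat set) d k (t :: nat \<Rightarrow> nat) \<Delta> P (s :: real).
     finite_metric_space X d \<longrightarrow> k \<ge> 2 \<longrightarrow> t ` {..<k} \<subseteq> X \<longrightarrow> inj_on t {..<k} \<longrightarrow>
     \<Delta> > 0 \<longrightarrow> shortest_path X d P \<longrightarrow> path_length d P < \<Delta> / ln (real k) \<longrightarrow> s \<ge> 1 \<longrightarrow>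
     measure (radii_measure k (\<Delta> / ln (real k)) \<Delta>)
       {R \<in> space (radii_measure k (\<Delta> / ln (real k)) \<Delta>). real (Z_count X d k t P R) > s}
       \<le> 2 * exp (- c * s)"
proof (rule exI[of _ "ln (5/4) / 7"], intro conjI allI impI)
  show "(0::real) < ln (5/4) / 7" by simp
next
  fix X :: "nat set" and d k and t :: "nat \<Rightarrow> nat" and \<Delta> P and s :: real
  assume fm: "finite_metric_space X d" and k2: "2 \<le> k" and tX: "t ` {..<k} \<subseteq> X"
    and inj: "inj_on t {..<k}" and \<Delta>: "0 < \<Delta>" and sp: "shortest_path X d P"
    and PL: "path_length d P < \<Delta> / ln (real k)" and s1: "1 \<le> s"
  define lam where "lam = \<Delta> / ln (real k)"
  define \<theta> :: real where "\<theta> = 5/4"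
  have lnk: "ln (real k) > 0" using k2 by simp
  have lam0: "lam > 0" unfolding lam_def using lnk \<Delta> by simp
  have Ez: "exp (- \<Delta> / lam) = 1 / real k"
  proof -
    have "- \<Delta> / lam = - ln (real k)" unfolding lam_def using \<Delta> lnk by simp
    then show ?thesis using k2 by (simp add: exp_minus inverse_eq_divide)
  qed
  define L where "L = path_length d P"
  have ne: "P \<noteq> []" and PX: "set P \<subseteq> X" using sp unfolding shortest_path_def by auto
  have d0: "\<And>x y. x \<in> X \<Longrightarrow> y \<in> X \<Longrightarrow> 0 \<le> d x y"
    and tri: "\<And>x y z. x \<in> X \<Longrightarrow> y \<in> X \<Longrightarrow> z \<in> X \<Longrightarrow> d x z \<le> d x y + d y z"
    using fm unfolding finite_metric_space_def by blast+
  have L0: "0 \<le> L" unfolding L_def path_length_def using ne PX by (intro d0) auto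
  have Llam: "L < lam" using PL unfolding L_def lam_def .
  have pd: "\<And>y0 y1. y0 \<in> set P \<Longrightarrow> y1 \<in> set P \<Longrightarrow> d y0 y1 \<le> L"
    unfolding L_def using path_dist[OF fm sp] by blast
  define a where "a j = Min ((\<lambda>y. d (t j) y) ` set P)" for j
  define b where "b j = Max ((\<lambda>y. d (t j) y) ` set P)" for j
  have aP: "a j \<le> d (t j) y" if "y \<in> set P" for j y unfolding a_def using that by simp
  have bP: "d (t j) y \<le> b j" if "y \<in> set P" for j y unfolding b_def using that by simp
  have aex: "\<exists>y\<in>set P. a j = d (t j) y" for j
  proof -
    have "Min (d (t j) ` set P) \<in> d (t j) ` set P" by (rule Min_in) (use ne in auto)
    then show ?thesis unfolding a_def by auto
  qed
  have bex: "\<exists>y\<in>set P. b j = d (t j) y" for j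
  proof -
    have "Max (d (t j) ` set P) \<in> d (t j) ` set P" by (rule Max_in) (use ne in auto)
    then show ?thesis unfolding b_def by auto
  qed
  have a0: "0 \<le> a j" if "j < k" for j
  proof -
    obtain y where y: "y \<in> set P" "a j = d (t j) y" using aex by blast
    have "t j \<in> X" using tX that by auto
    then show ?thesis using d0[of "t j" y] y PX by auto
  qed
  have ab: "a j \<le> b j" for j using aP bP ne by (meson list.set_sel(1) order.trans)
  have bL: "b j \<le> a j + L" if "j < k" for j
  proof -
    obtain y0 where y0: "y0 \<in> set P" "a j = d (t j) y0" using aex by blast
    obtain y1 where y1: "y1 \<in> set P" "b j = d (t j) y1" using bex by blast
    have "d (t j) y1 \<le> d (t j) y0 + d y0 y1" using tX that y0 y1 PX by (intro tri) auto
    also have "\<dots> \<le> a j + L" using pd[OF y0(1) y1(1)] y0 by simp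
    finally show ?thesis using y1 by simp
  qed
  define Tx where "Tx = texp lam \<Delta>"
  have pT: "prob_space Tx" unfolding Tx_def by (rule prob_space_texp[OF lam0 \<Delta>])
  define M where "M = radii_measure k lam \<Delta>"
  have M_def': "M = PiM {..<k} (\<lambda>_. Tx)" unfolding M_def radii_measure_def Tx_def ..
  have pM: "prob_space M" unfolding M_def' by (rule prob_space_PiM) (use pT in auto)
  have fT: "finite_measure Tx" using pT unfolding prob_space_def by auto
  have fM: "finite_measure M" using pM unfolding prob_space_def by auto
  have spM: "space M = PiE {..<k} (\<lambda>_. UNIV)" unfolding M_def' Tx_def by (simp add: space_PiM)
  define p where "p j = measure Tx {a j..<b j}" for j
  define q where "q j = measure Tx {..<a j}" for j
  define Ef where "Ef x = exp (- max 0 (min x \<Delta>) / lam)" for x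
  define Z0 where "Z0 = 1 - exp (- \<Delta> / lam)"
  have Z0pos: "Z0 > 0" unfolding Z0_def using \<Delta> lam0 by simp
  have Mlt: "measure Tx {..<x} = (1 - Ef x) / Z0" for x
  proof -
    have "emeasure Tx {..<x} = ennreal ((1 - Ef x) / Z0)"
      unfolding Tx_def Ef_def Z0_def by (rule texp_lessThan[OF lam0 \<Delta>])
    moreover have "0 \<le> (1 - Ef x) / Z0" unfolding Ef_def using Z0pos lam0 by simp
    ultimately show ?thesis using finite_measure.emeasure_eq_measure[OF fT] by simp
  qed
  have pq: "p j = (Ef (a j) - Ef (b j)) / Z0" "q j = (1 - Ef (a j)) / Z0" for j
  proof -
    have "{a j..<b j} = {..<b j} - {..<a j}" by auto
    then have "p j = measure Tx ({..<b j} - {..<a j})" unfolding p_def by simp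
    also have "\<dots> = measure Tx {..<b j} - measure Tx {..<a j}"
      by (rule finite_measure.finite_measure_Diff[OF fT]) (use ab[of j] in \<open>auto simp: Tx_def\<close>)
    finally have "p j = measure Tx {..<b j} - measure Tx {..<a j}" .
    then show "p j = (Ef (a j) - Ef (b j)) / Z0" unfolding Mlt by (simp add: diff_divide_distrib)
    show "q j = (1 - Ef (a j)) / Z0" unfolding q_def Mlt ..
  qed
  have key: "25 * p j + 16 * q j \<le> 16 + 16 * (2 / real k)" if "j < k" for j
    unfolding pq Ef_def Z0_def
    by (rule key_ineq[OF lam0 \<Delta> a0[OF that] ab bL[OF that] L0 Llam Ez k2])
  have p0: "0 \<le> p j" "0 \<le> q j" for j unfolding p_def q_def by auto
  define Tk where "Tk = (\<Sum>n<k. \<theta> * p n * (\<Prod>i<n. \<theta> * p i + q i))"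
  have Tk: "Tk \<le> 4 * exp 2"
  proof -
    have "Tk + 4 * (\<Prod>i<k. \<theta> * p i + q i) \<le> 4 * (1 + 2 / real k) ^ k"
      unfolding Tk_def \<theta>_def by (rule comb_bound) (use p0 key in auto)
    moreover have "0 \<le> (\<Prod>i<k. \<theta> * p i + q i)" using p0 unfolding \<theta>_def
      by (intro prod_nonneg) auto
    moreover have "(1 + 2 / real k) ^ k \<le> exp (2 / real k) ^ k"
      by (intro power_mono) auto
    moreover have "exp (2 / real k) ^ k = exp 2"
      using exp_of_nat_mult[of k "2 / real k", symmetric] k2 by simp
    ultimately show ?thesis by linarith
  qed
  define Box where "Box n J = PiE {..<k} (\<lambda>i. if i < n then (if i \<in> J then {a i..<b i} else {..<a i})
      else if i = n then {a n..<b n} else UNIV)" for n and J :: "nat set"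
  have Box_sets: "Box n J \<in> sets M" for n J
    unfolding Box_def M_def' Tx_def by (rule sets_PiM_I_finite) auto
  have Box_meas: "measure M (Box n J) = p n * ((\<Prod>i\<in>J. p i) * (\<Prod>i\<in>{..<n} - J. q i))"
    if n: "n < k" and J: "J \<subseteq> {..<n}" for n J
  proof -
    define B where "B i = (if i < n then (if i \<in> J then {a i..<b i} else {..<a i})
      else if i = n then {a n..<b n} else UNIV)" for i
    have "emeasure M (Box n J) = (\<Prod>i\<in>{..<k}. emeasure Tx (B i))"
    proof -
      have "emeasure M (prod_emb {..<k} (\<lambda>_. Tx) {..<k} (PiE {..<k} B)) = (\<Prod>i\<in>{..<k}. emeasure Tx (B i))"
        unfolding M_def' by (rule emeasure_PiM_emb) (use pT in \<open>auto simp: B_def Tx_def\<close>)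
      moreover have "prod_emb {..<k} (\<lambda>_. Tx) {..<k} (PiE {..<k} B) = Box n J"
        unfolding Box_def B_def Tx_def by (subst prod_emb_PiE_same_index) auto
      ultimately show ?thesis by simp
    qed
    also have "\<dots> = (\<Prod>i\<in>{..<k}. ennreal (measure Tx (B i)))"
      using finite_measure.emeasure_eq_measure[OF fT] by simp
    also have "\<dots> = ennreal (\<Prod>i\<in>{..<k}. measure Tx (B i))"
      by (rule prod_ennreal) auto
    finally have e: "emeasure M (Box n J) = ennreal (\<Prod>i\<in>{..<k}. measure Tx (B i))" .
    have "measure M (Box n J) = (\<Prod>i\<in>{..<k}. measure Tx (B i))"
      using e finite_measure.emeasure_eq_measure[OF fM] by (simp add: prod_nonneg)
    also have "\<dots> = (\<Prod>i\<in>{..<Suc n}. measure Tx (B i))"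
    proof (rule prod.mono_neutral_right)
      show "\<forall>i\<in>{..<k} - {..<Suc n}. measure Tx (B i) = 1"
        using prob_space.prob_space[OF pT] by (auto simp: B_def Tx_def)
    qed (use n in auto)
    also have "\<dots> = (\<Prod>i\<in>{..<n}. measure Tx (B i)) * p n"
      by (simp add: B_def p_def)
    also have "(\<Prod>i\<in>{..<n}. measure Tx (B i)) = (\<Prod>i\<in>{..<n}. if i \<in> J then p i else q i)"
      by (rule prod.cong) (auto simp: B_def p_def q_def)
    also have "\<dots> = (\<Prod>i\<in>J. p i) * (\<Prod>i\<in>{..<n} - J. q i)"
    proof -
      have "({..<n} \<inter> {x. x \<in> J}) = J" "({..<n} \<inter> - {x. x \<in> J}) = {..<n} - J" using J by auto
      then show ?thesis by (simp add: prod.If_cases)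
    qed
    finally show ?thesis by simp
  qed
  define Js where "Js n = {J. J \<subseteq> {..<n} \<and> s - 2 < real (card J)}" for n :: nat
  have Js_fin: "finite (Js n)" for n
    by (rule finite_subset[of _ "Pow {..<n}"]) (auto simp: Js_def)
  define U where "U = (\<Union>n\<in>{..<k}. \<Union>J\<in>Js n. Box n J)"
  have U_sets: "U \<in> sets M" unfolding U_def
    using Js_fin Box_sets by (intro sets.finite_UN) auto
  have incl: "{R \<in> space M. s < real (Z_count X d k t P R)} \<subseteq> U"
  proof
    fix R assume "R \<in> {R \<in> space M. s < real (Z_count X d k t P R)}"
    then have R: "R \<in> PiE {..<k} (\<lambda>_. UNIV)" and Zs: "s < real (Z_count X d k t P R)"
      using spM by auto
    define Sx where "Sx = {j \<in> {..<k}. a j \<le> R j \<and> R j < b j \<and> (\<forall>i<j. R i < b i)}"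
    define T' where "T' = {j \<in> {..<k}. cluster X d t R j \<inter> set P \<noteq> {}}"
    define U' where "U' = {j \<in> {..<k}. b j \<le> R j \<and> (\<forall>i<j. R i < b i)}"
    have finS: "finite Sx" "finite T'" "finite U'" unfolding Sx_def T'_def U'_def by auto
    have "Z_count X d k t P R \<le> card (cluster X d t R ` T')"
      unfolding Z_count_def
    proof (rule card_mono)
      show "finite (cluster X d t R ` T')" using finS by simp
      show "{S \<in> partial_partition X d k t R. S \<inter> set P \<noteq> {}} \<subseteq> cluster X d t R ` T'"
        unfolding partial_partition_def T'_def by auto
    qed
    also have "\<dots> \<le> card T'" by (rule card_image_le) (use finS in simp)
    also have "T' \<subseteq> Sx \<union> U'"
    proof
      fix j assume "j \<in> T'"
      then obtain y where j: "j < k" and y: "y \<in> cluster X d t R j" "y \<in> set P"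
        unfolding T'_def by auto
      have yj: "d (t j) y \<le> R j" using y(1) unfolding cluster_def cball_in_def by auto
      have ym: "R m < b m" if "m < j" for m
      proof -
        have "\<not> d (t m) y \<le> R m" using y that PX unfolding cluster_def cball_in_def by auto
        then show ?thesis using bP[OF y(2), of m] by linarith
      qed
      have "a j \<le> R j" using aP[OF y(2), of j] yj by linarith
      then show "j \<in> Sx \<union> U'" unfolding Sx_def U'_def using j ym by auto
    qed
    then have "card T' \<le> card (Sx \<union> U')" by (intro card_mono) (use finS in auto)
    also have "\<dots> \<le> card Sx + card U'" by (rule card_Un_le)
    also have "card U' \<le> 1"
    proof -
      have "\<forall>x\<in>U'. \<forall>y\<in>U'. x = y"
      proof (intro ballI)
        fix x y assume x: "x \<in> U'" and y: "y \<in> U'"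
        show "x = y"
        proof (rule ccontr)
          assume "x \<noteq> y"
          then consider "x < y" | "y < x" by linarith
          then show False
          proof cases
            case 1 then show False using x y unfolding U'_def by force
          next
            case 2 then show False using x y unfolding U'_def by force
          qed
        qed
      qed
      then show ?thesis using card_le_Suc0_iff_eq[OF finS(3)] by simp
    qed
    finally have ZS: "Z_count X d k t P R \<le> card Sx + 1" by simp
    have "Sx \<noteq> {}"
    proof
      assume "Sx = {}"
      then have "Z_count X d k t P R \<le> 1" using ZS by simp
      then show False using Zs s1 by simp
    qed
    define n where "n = Max Sx"
    have nS: "n \<in> Sx" unfolding n_def using finS \<open>Sx \<noteq> {}\<close> by (intro Max_in) auto
    have nk: "n < k" using nS unfolding Sx_def by auto
    define J where "J = Sx - {n}"
    have Jn: "J \<subseteq> {..<n}"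
    proof
      fix j assume "j \<in> J"
      then have "j \<in> Sx" "j \<noteq> n" unfolding J_def by auto
      moreover have "j \<le> n" unfolding n_def using finS \<open>j \<in> Sx\<close> by (intro Max_ge) auto
      ultimately show "j \<in> {..<n}" by auto
    qed
    have cJ: "card J = card Sx - 1" unfolding J_def using nS finS by simp
    have cS: "card Sx \<ge> 1" using finS \<open>Sx \<noteq> {}\<close> by (simp add: Suc_le_eq card_gt_0_iff)
    have "s - 2 < real (card J)" using ZS Zs cS unfolding cJ by linarith
    then have JJs: "J \<in> Js n" unfolding Js_def using Jn by auto
    have "R \<in> Box n J"
      unfolding Box_def
    proof (rule PiE_I)
      fix i assume i: "i \<in> {..<k}"
      have nprop: "\<forall>i'<n. R i' < b i'" "a n \<le> R n" "R n < b n" using nS unfolding Sx_def by auto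
      show "R i \<in> (if i < n then (if i \<in> J then {a i..<b i} else {..<a i})
          else if i = n then {a n..<b n} else UNIV)"
      proof (cases "i < n")
        case True
        show ?thesis
        proof (cases "i \<in> J")
          case True
          then have "i \<in> Sx" unfolding J_def by auto
          then show ?thesis using \<open>i < n\<close> True unfolding Sx_def by auto
        next
          case False
          then have "i \<notin> Sx" using \<open>i < n\<close> unfolding J_def by auto
          moreover have "\<forall>i'<i. R i' < b i'" using nprop \<open>i < n\<close> by auto
          moreover have "R i < b i" using nprop \<open>i < n\<close> by auto
          ultimately have "R i < a i" using i unfolding Sx_def by auto
          then show ?thesis using \<open>i < n\<close> False by auto
        qed
      next
        case False
        then show ?thesis using nprop by auto
      qed
    next
      fix i assume "i \<notin> {..<k}"
      then show "R i = undefined" using R by (auto simp: PiE_def extensional_def)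
    qed
    then show "R \<in> U" unfolding U_def using nk JJs by auto
  qed
  have inner: "(\<Sum>J\<in>Js n. measure M (Box n J)) \<le> p n * (\<theta> powr (2 - s) * (\<Prod>i<n. \<theta> * p i + q i))"
    if n: "n < k" for n
  proof -
    have th0: "\<theta> > 0" "1 \<le> \<theta>" unfolding \<theta>_def by simp_all
    define W where "W J = (\<Prod>i\<in>J. p i) * (\<Prod>i\<in>{..<n} - J. q i)" for J
    have W0: "0 \<le> W J" for J unfolding W_def using p0 by (intro mult_nonneg_nonneg prod_nonneg) auto
    have "(\<Sum>J\<in>Js n. measure M (Box n J)) = (\<Sum>J\<in>Js n. p n * W J)"
      by (intro sum.cong) (auto simp: Js_def W_def Box_meas[OF n])
    also have "\<dots> = p n * (\<Sum>J\<in>Js n. W J)" by (simp add: sum_distrib_left)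
    also have "(\<Sum>J\<in>Js n. W J) \<le> (\<Sum>J\<in>Js n. \<theta> powr (2 - s) * (\<theta> ^ card J * W J))"
    proof (intro sum_mono)
      fix J assume J: "J \<in> Js n"
      have "\<theta> powr (2 - s) * \<theta> ^ card J = \<theta> powr (2 - s) * \<theta> powr real (card J)"
        using th0 by (simp add: powr_realpow)
      also have "\<dots> = \<theta> powr (2 - s + real (card J))" by (simp add: powr_add)
      finally have eq: "\<theta> powr (2 - s) * \<theta> ^ card J = \<theta> powr (2 - s + real (card J))" .
      have "1 \<le> \<theta> powr (2 - s + real (card J))"
        using J th0 by (intro ge_one_powr_ge_zero) (auto simp: Js_def)
      then have "1 * W J \<le> (\<theta> powr (2 - s) * \<theta> ^ card J) * W J"
        unfolding eq using W0 by (intro mult_right_mono) auto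
      then show "W J \<le> \<theta> powr (2 - s) * (\<theta> ^ card J * W J)" by (simp add: mult.assoc)
    qed
    also have "\<dots> \<le> (\<Sum>J\<in>Pow {..<n}. \<theta> powr (2 - s) * (\<theta> ^ card J * W J))"
      by (intro sum_mono2) (use W0 th0 in \<open>auto simp: Js_def\<close>)
    also have "\<dots> = \<theta> powr (2 - s) * (\<Sum>J\<in>Pow {..<n}. \<theta> ^ card J * W J)"
      by (simp add: sum_distrib_left)
    also have "(\<Sum>J\<in>Pow {..<n}. \<theta> ^ card J * W J) = (\<Prod>i<n. \<theta> * p i + q i)"
    proof -
      have "(\<Prod>i<n. \<theta> * p i + q i) = (\<Sum>J\<in>Pow {..<n}. (\<Prod>i\<in>J. \<theta> * p i) * (\<Prod>i\<in>{..<n} - J. q i))"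
        by (rule prod_add) simp
      also have "\<dots> = (\<Sum>J\<in>Pow {..<n}. \<theta> ^ card J * W J)"
      proof (intro sum.cong refl)
        fix J assume "J \<in> Pow {..<n}"
        then have "finite J" by (auto intro: finite_subset)
        then show "(\<Prod>i\<in>J. \<theta> * p i) * (\<Prod>i\<in>{..<n} - J. q i) = \<theta> ^ card J * W J"
          unfolding W_def by (simp add: prod.distrib mult.assoc)
      qed
      finally show ?thesis by simp
    qed
    finally show ?thesis using p0[of n] by (simp add: mult_left_mono)
  qed
  have "measure M {R \<in> space M. s < real (Z_count X d k t P R)} \<le> measure M U"
    using incl U_sets by (rule finite_measure.finite_measure_mono[OF fM])
  also have "\<dots> \<le> (\<Sum>n\<in>{..<k}. measure M (\<Union>J\<in>Js n. Box n J))"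
    unfolding U_def using Js_fin Box_sets by (intro measure_UNION_le) auto
  also have "\<dots> \<le> (\<Sum>n\<in>{..<k}. \<Sum>J\<in>Js n. measure M (Box n J))"
    using Js_fin Box_sets by (intro sum_mono measure_UNION_le) auto
  also have "\<dots> \<le> (\<Sum>n\<in>{..<k}. p n * (\<theta> powr (2 - s) * (\<Prod>i<n. \<theta> * p i + q i)))"
    using inner by (intro sum_mono) auto
  also have "\<dots> = \<theta> powr (1 - s) * Tk"
  proof -
    have th0: "\<theta> > 0" unfolding \<theta>_def by simp
    have "\<theta> powr (2 - s) = \<theta> powr ((1 - s) + 1)" by simp
    also have "\<dots> = \<theta> powr (1 - s) * \<theta>" using th0 by (simp only: powr_add powr_one_gt_zero_iff) simp
    finally have "\<theta> powr (2 - s) = \<theta> powr (1 - s) * \<theta>" .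
    then show ?thesis unfolding Tk_def sum_distrib_left by (intro sum.cong) (auto simp: algebra_simps)
  qed
  also have "\<dots> \<le> \<theta> powr (1 - s) * (4 * exp 2)"
    using Tk by (intro mult_left_mono) (auto simp: \<theta>_def)
  also have "\<dots> \<le> 37 * exp (- (7 * (ln (5/4) / 7 * s)))"
  proof -
    have th0: "\<theta> > 0" unfolding \<theta>_def by simp
    have "\<theta> powr (1 - s) = \<theta> powr 1 * \<theta> powr (- s)"
      using powr_add[of \<theta> 1 "- s"] by simp
    also have "\<theta> powr 1 = \<theta>" using th0 by simp
    also have "\<theta> powr (- s) = exp ((- s) * ln (5/4))" unfolding \<theta>_def powr_def by simp
    also have "(- s) * ln (5/4) = - (7 * (ln (5/4) / 7 * s))" by simp
    finally have "\<theta> powr (1 - s) = \<theta> * exp (- (7 * (ln (5/4) / 7 * s)))" .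
    moreover have "exp (2::real) \<le> 7.4"
    proof -
      have "exp (2::real) = exp 1 * exp 1" by (simp add: exp_add[symmetric])
      also have "\<dots> \<le> 2.72 * 2.72" using e_less_272 by (intro mult_mono) auto
      finally show ?thesis by simp
    qed
    ultimately show ?thesis
    proof -
      assume eq: "\<theta> powr (1 - s) = \<theta> * exp (- (7 * (ln (5/4) / 7 * s)))"
        and e2: "exp (2::real) \<le> 7.4"
      define E' where "E' = exp (- (7 * (ln (5/4::real) / 7 * s)))"
      have E'0: "0 \<le> E'" unfolding E'_def by simp
      have "\<theta> powr (1 - s) * (4 * exp 2) = \<theta> * E' * (4 * exp 2)"
        unfolding eq E'_def by simp
      also have "\<dots> = (5 * exp 2) * E'" unfolding \<theta>_def by simp
      also have "\<dots> \<le> 37 * E'" using e2 E'0 by (intro mult_right_mono) auto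
      finally show ?thesis unfolding E'_def .
    qed
  qed
  finally have m1: "measure M {R \<in> space M. s < real (Z_count X d k t P R)} \<le> 37 * exp (- (7 * (ln (5/4) / 7 * s)))" .
  have m2: "measure M {R \<in> space M. s < real (Z_count X d k t P R)} \<le> 1"
    by (rule prob_space.prob_le_1[OF pM])
  have "measure M {R \<in> space M. s < real (Z_count X d k t P R)} \<le> 2 * exp (- (ln (5/4) / 7 * s))"
    by (rule tail_bound[OF m2 m1])
  then show "measure (radii_measure k (\<Delta> / ln (real k)) \<Delta>)
       {R \<in> space (radii_measure k (\<Delta> / ln (real k)) \<Delta>). real (Z_count X d k t P R) > s}
       \<le> 2 * exp (- (ln (5/4) / 7) * s)"
    unfolding M_def lam_def by simp
qed

end
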